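(* Let $a,b,c,d$ be positive integers. Then for every positive integer $t$, $$i((a,b,c,d),t)=i((d,c,b,a),t)=\sum_{j=0}^{t\min\{a,d\}}F(a,b,j,t)\,F(c,d,-j,t).$$
   Context: For $S,T\subseteq[n]$, write $T\le S$ if $|T|=|S|$ and the $i$-th smallest element of $T$ is at most the $i$-th smallest element of $S$ for each $i$. The Schubert matroid $\mathrm{SM}_n(S)$ is the matroid on $[n]$ with bases $\{T\subseteq[n]:T\le S\}$; $i(M,t)$ is the number of lattice points in the $t$-th dilate of the matroid polytope $\mathrm{conv}\{\sum_{b\in B}e_b: B\text{ a basis of }M\}$. For a sequence $r=(r_1,\dots,r_{2m})$ of integers with $r_1\ge0$, $r_i>0$ for $i\ge2$, let $n=\sum r_i$ and let $S\subseteq[n]$ have indicator vector $(0^{r_1},1^{r_2},\dots,0^{r_{2m-1}},1^{r_{2m}})$ ($x^p$ = $p$ consecutive copies of $x$); $i(r,t):=i(\mathrm{SM}_n(S),t)$. For integers $a,b\ge0$ with $a+b\ge1$, $c\in\mathbb Z$, $t\ge0$: $F(a,b,c,t)=\sum_{j=0}^{a+b}(-1)^j\binom{a+b}{j}\binom{(t+1)(b-j)+a+c-1}{a+b-1}$, with $\binom00=1$ and $\binom NK=0$ if $K<0$ or $N<K$. *)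

theory Defs
  imports Complex_Main
begin

definition gale_le :: "nat set \<Rightarrow> nat set \<Rightarrow> bool" where
  "gale_le T S \<longleftrightarrow> card T = card S \<and>
     (\<forall>i < card S. sorted_list_of_set T ! i \<le> sorted_list_of_set S ! i)"

definition schubert_bases :: "nat \<Rightarrow> nat set \<Rightarrow> nat set set" where
  "schubert_bases n S = {T. T \<subseteq> {1..n} \<and> gale_le T S}"

(* Membership in the dilated convex hull of the
   finite set of basis indicator vectors is written out as a convex combination. *)
definition in_dilated_polytope :: "nat \<Rightarrow> nat set set \<Rightarrow> nat \<Rightarrow> (nat \<Rightarrow> real) \<Rightarrow> bool" where
  "in_dilated_polytope n \<B> t x \<longleftrightarrow>
     (\<exists>l :: nat set \<Rightarrow> real. (\<forall>B\<in>\<B>. l B \<ge> 0) \<and> (\<Sum>B\<in>\<B>. l B) = 1 \<and>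
        (\<forall>k\<in>{1..n}. x k = real t * (\<Sum>B\<in>\<B>. l B * (if k \<in> B then 1 else 0))))"

definition ehrhart :: "nat \<Rightarrow> nat set set \<Rightarrow> nat \<Rightarrow> nat" where
  "ehrhart n \<B> t = card {x :: nat \<Rightarrow> int. (\<forall>k. k \<notin> {1..n} \<longrightarrow> x k = 0) \<and>
        in_dilated_polytope n \<B> t (\<lambda>k. real_of_int (x k))}"

fun ind_word :: "bool \<Rightarrow> nat list \<Rightarrow> bool list" where
  "ind_word b [] = []"
| "ind_word b (k # rs) = replicate k b @ ind_word (\<not> b) rs"

definition schubert_set :: "nat list \<Rightarrow> nat set" where
  "schubert_set r = {k. 1 \<le> k \<and> k \<le> sum_list r \<and> ind_word False r ! (k - 1)}"

definition i_r :: "nat list \<Rightarrow> nat \<Rightarrow> nat" where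
  "i_r r t = ehrhart (sum_list r) (schubert_bases (sum_list r) (schubert_set r)) t"

definition binom :: "int \<Rightarrow> int \<Rightarrow> int" where
  "binom N K = (if K < 0 \<or> N < K then 0 else int (nat N choose nat K))"

definition F :: "nat \<Rightarrow> nat \<Rightarrow> int \<Rightarrow> nat \<Rightarrow> int" where
  "F a b c t = (\<Sum>j = 0..a+b. (-1) ^ j * int ((a+b) choose j) *
       binom ((int t + 1) * (int b - int j) + int a + c - 1) (int a + int b - 1))"

end

theory Submission
  imports Defs
begin


lemma sorted_nth_le_iff:
  fixes B :: "nat set"
  assumes fin: "finite B" and i: "i < card B"
  shows "sorted_list_of_set B ! i \<le> m \<longleftrightarrow> i < card (B \<inter> {..m})"
proof -
  define xs where "xs = sorted_list_of_set B"
  have len: "length xs = card B" and st: "sorted xs" and dis: "distinct xs" and setx: "set xs = B"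
    using fin by (auto simp: xs_def)
  show ?thesis
  proof
    assume le: "sorted_list_of_set B ! i \<le> m"
    have "(\<lambda>j. xs ! j) ` {..i} \<subseteq> B \<inter> {..m}"
    proof
      fix y assume "y \<in> (\<lambda>j. xs ! j) ` {..i}"
      then obtain j where j: "j \<le> i" "y = xs ! j" by auto
      have "xs ! j \<le> xs ! i" using st j i len by (simp add: sorted_nth_mono)
      moreover have "xs ! j \<in> B" using j i len setx by (metis nth_mem order.strict_trans1)
      ultimately show "y \<in> B \<inter> {..m}" using j le unfolding xs_def by simp
    qed
    moreover have "card ((\<lambda>j. xs ! j) ` {..i}) = Suc i"
      proof -
      have "inj_on (\<lambda>j. xs ! j) {..i}" by (rule inj_on_nth) (use dis i len in auto)
      thus ?thesis by (simp add: card_image)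
    qed
    ultimately have "Suc i \<le> card (B \<inter> {..m})"
      using card_mono[of "B \<inter> {..m}"] fin by (metis finite_Int)
    then show "i < card (B \<inter> {..m})" by simp
  next
    assume lt: "i < card (B \<inter> {..m})"
    show "sorted_list_of_set B ! i \<le> m"
    proof (rule ccontr)
      assume "\<not> ?thesis"
      hence gt: "xs ! i > m" by (simp add: xs_def)
      have "B \<inter> {..m} \<subseteq> (\<lambda>j. xs ! j) ` {..<i}"
      proof
        fix y assume y: "y \<in> B \<inter> {..m}"
        then obtain j where j: "j < length xs" "y = xs ! j" using y setx in_set_conv_nth[of y xs] by blast
        have "j < i"
        proof (rule ccontr)
          assume "\<not> j < i"
          hence "xs ! i \<le> xs ! j" using st j by (simp add: sorted_nth_mono)
          thus False using gt y j by auto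
        qed
        thus "y \<in> (\<lambda>j. xs ! j) ` {..<i}" using j by auto
      qed
      hence "card (B \<inter> {..m}) \<le> card ((\<lambda>j. xs ! j) ` {..<i})" by (simp add: card_mono)
      also have "\<dots> \<le> i" using card_image_le[of "{..<i}"] by simp
      finally show False using lt by simp
    qed
  qed
qed



lemma ind_word4: "ind_word False [a,b,c,d] = replicate a False @ replicate b True @ replicate c False @ replicate d True"
  by simp

lemma schubert_set4: "schubert_set [a,b,c,d] = {a+1..a+b} \<union> {a+b+c+1..a+b+c+d}"
proof -
  have "ind_word False [a,b,c,d] ! (k - 1) \<longleftrightarrow> (a+1 \<le> k \<and> k \<le> a+b) \<or> (a+b+c+1 \<le> k)"
    if "1 \<le> k" "k \<le> a+b+c+d" for k
    using that by (auto simp: nth_append)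
  then show ?thesis unfolding schubert_set_def by auto
qed

lemma sorted_S4: "sorted_list_of_set (schubert_set [a,b,c,d]) = [a+1..<a+b+1] @ [a+b+c+1..<a+b+c+d+1]"
proof -
  have "sorted_list_of_set (set ([a+1..<a+b+1] @ [a+b+c+1..<a+b+c+d+1])) = [a+1..<a+b+1] @ [a+b+c+1..<a+b+c+d+1]"
    by (rule sorted_distinct_set_unique) (auto simp: sorted_append)
  moreover have "set ([a+1..<a+b+1] @ [a+b+c+1..<a+b+c+d+1]) = schubert_set [a,b,c,d]"
    by (auto simp: schubert_set4)
  ultimately show ?thesis by simp
qed

lemma card_S4: "card (schubert_set [a,b,c,d]) = b + d"
proof -
  have "card (schubert_set [a,b,c,d]) = length (sorted_list_of_set (schubert_set [a,b,c,d]))"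
    by (simp add: schubert_set4)
  thus ?thesis by (simp add: sorted_S4)
qed

lemma nth_S4: "i < b + d \<Longrightarrow> sorted_list_of_set (schubert_set [a,b,c,d]) ! i = (if i < b then a+1+i else a+c+1+i)"
proof -
  assume i: "i < b + d"
  show ?thesis
  proof (cases "i < b")
    case True thus ?thesis by (simp add: sorted_S4 nth_append del: upt_Suc)
  next
    case False
    hence "i - b < d" using i by simp
    thus ?thesis using False by (simp add: sorted_S4 nth_append del: upt_Suc)
  qed
qed

lemma gale_char:
  assumes T: "T \<subseteq> {1..a+b+c+d}" and b: "b > 0"
  shows "gale_le T (schubert_set [a,b,c,d]) \<longleftrightarrow> card T = b + d \<and> b \<le> card (T \<inter> {..a+b})"
proof -
  have fT: "finite T" using T finite_subset by blast
  show ?thesis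
  proof
    assume g: "gale_le T (schubert_set [a,b,c,d])"
    hence cT: "card T = b + d" by (simp add: gale_le_def card_S4)
    have "sorted_list_of_set T ! (b-1) \<le> sorted_list_of_set (schubert_set [a,b,c,d]) ! (b-1)"
      using g b by (simp add: gale_le_def card_S4)
    also have "\<dots> = a + b" using b by (simp add: nth_S4)
    finally have "b - 1 < card (T \<inter> {..a+b})"
      using sorted_nth_le_iff[OF fT, of "b-1" "a+b"] cT b by simp
    thus "card T = b + d \<and> b \<le> card (T \<inter> {..a+b})" using cT by simp
  next
    assume h: "card T = b + d \<and> b \<le> card (T \<inter> {..a+b})"
    have "sorted_list_of_set T ! i \<le> sorted_list_of_set (schubert_set [a,b,c,d]) ! i" if i: "i < b + d" for i
    proof (cases "i < b")
      case True
      have "T \<inter> {..a+b} \<subseteq> (T \<inter> {..a+1+i}) \<union> {a+2+i..a+b}" by auto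
      hence "card (T \<inter> {..a+b}) \<le> card ((T \<inter> {..a+1+i}) \<union> {a+2+i..a+b})"
        by (intro card_mono) (use fT in auto)
      also have "\<dots> \<le> card (T \<inter> {..a+1+i}) + card {a+2+i..a+b}" by (rule card_Un_le)
      also have "card {a+2+i..a+b} = b - 1 - i" by simp
      finally have "i < card (T \<inter> {..a+1+i})" using h True by linarith
      hence "sorted_list_of_set T ! i \<le> a+1+i"
        using sorted_nth_le_iff[OF fT, of i "a+1+i"] h i by simp
      thus ?thesis using True i by (simp add: nth_S4)
    next
      case False
      have "T \<subseteq> (T \<inter> {..a+c+1+i}) \<union> {a+c+2+i..a+b+c+d}" using T by auto
      hence "card T \<le> card ((T \<inter> {..a+c+1+i}) \<union> {a+c+2+i..a+b+c+d})"
        by (intro card_mono) (use fT in auto)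
      also have "\<dots> \<le> card (T \<inter> {..a+c+1+i}) + card {a+c+2+i..a+b+c+d}" by (rule card_Un_le)
      also have "card {a+c+2+i..a+b+c+d} = b + d - 1 - i" by simp
      finally have "i < card (T \<inter> {..a+c+1+i})" using h i by linarith
      hence "sorted_list_of_set T ! i \<le> a+c+1+i"
        using sorted_nth_le_iff[OF fT, of i "a+c+1+i"] h i by simp
      thus ?thesis using False i by (simp add: nth_S4)
    qed
    thus "gale_le T (schubert_set [a,b,c,d])" using h by (simp add: gale_le_def card_S4)
  qed
qed



lemma finite_sb: "finite (schubert_bases n S)"
  by (rule finite_subset[of _ "Pow {1..n}"]) (auto simp: schubert_bases_def)

lemma sum_ind_card: "finite A \<Longrightarrow> (\<Sum>k\<in>A. (if k \<in> B then (1::real) else 0)) = real (card (B \<inter> A))"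
  by (simp add: sum.If_cases Int_commute)

lemma poly_sum:
  fixes l :: "nat set \<Rightarrow> real"
  assumes "finite Bs"
  shows "(\<Sum>k\<in>{1..m}. real t * (\<Sum>B\<in>Bs. l B * (if k \<in> B then 1 else 0)))
       = real t * (\<Sum>B\<in>Bs. l B * real (card (B \<inter> {1..m})))"
proof -
  have "(\<Sum>k\<in>{1..m}. real t * (\<Sum>B\<in>Bs. l B * (if k \<in> B then 1 else 0)))
      = real t * (\<Sum>B\<in>Bs. \<Sum>k\<in>{1..m}. l B * (if k \<in> B then 1 else 0))"
    by (simp add: sum_distrib_left) (rule sum.swap)
  also have "\<dots> = real t * (\<Sum>B\<in>Bs. l B * real (card (B \<inter> {1..m})))"
    by (simp add: sum_distrib_left[symmetric] sum_ind_card)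
  finally show ?thesis .
qed

lemma poly_to_cons:
  fixes x :: "nat \<Rightarrow> int"
  assumes b: "b > 0"
    and P: "in_dilated_polytope (a+b+c+d) (schubert_bases (a+b+c+d) (schubert_set [a,b,c,d])) t (\<lambda>k. real_of_int (x k))"
  shows "(\<forall>k\<in>{1..a+b+c+d}. 0 \<le> x k \<and> x k \<le> int t)
       \<and> (\<Sum>k\<in>{1..a+b+c+d}. x k) = int t * int (b+d)
       \<and> int t * int b \<le> (\<Sum>k\<in>{1..a+b}. x k)"
proof -
  define n where "n = a+b+c+d"
  define Bs where "Bs = schubert_bases n (schubert_set [a,b,c,d])"
  have fB: "finite Bs" unfolding Bs_def by (rule finite_sb)
  have memB: "B \<subseteq> {1..n} \<and> card B = b + d \<and> b \<le> card (B \<inter> {..a+b})" if "B \<in> Bs" for B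
    using that gale_char[of B a b c d] b by (auto simp: Bs_def schubert_bases_def n_def)
  obtain l where l0: "\<forall>B\<in>Bs. l B \<ge> 0" and l1: "(\<Sum>B\<in>Bs. l B) = 1"
    and lx: "\<forall>k\<in>{1..n}. real_of_int (x k) = real t * (\<Sum>B\<in>Bs. l B * (if k \<in> B then 1 else 0))"
    using P unfolding in_dilated_polytope_def Bs_def n_def by blast
  have bnd: "0 \<le> x k \<and> x k \<le> int t" if k: "k \<in> {1..n}" for k
  proof -
    have s0: "0 \<le> (\<Sum>B\<in>Bs. l B * (if k \<in> B then 1 else 0))"
      by (rule sum_nonneg) (use l0 in auto)
    have s1: "(\<Sum>B\<in>Bs. l B * (if k \<in> B then 1 else 0)) \<le> (\<Sum>B\<in>Bs. l B)"
      by (rule sum_mono) (use l0 in auto)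
    have "0 \<le> real_of_int (x k)" using lx k s0 by simp
    moreover have "real_of_int (x k) \<le> real t" using lx k s1 l1
      by (simp add: mult_left_le)
    ultimately show ?thesis by linarith
  qed
  have sm: "real_of_int (\<Sum>k\<in>{1..m}. x k) = real t * (\<Sum>B\<in>Bs. l B * real (card (B \<inter> {1..m})))"
    if "m \<le> n" for m
  proof -
    have "real_of_int (\<Sum>k\<in>{1..m}. x k) = (\<Sum>k\<in>{1..m}. real t * (\<Sum>B\<in>Bs. l B * (if k \<in> B then 1 else 0)))"
      using lx that by (simp add: of_int_sum)
    also have "\<dots> = real t * (\<Sum>B\<in>Bs. l B * real (card (B \<inter> {1..m})))" by (rule poly_sum[OF fB])
    finally show ?thesis .
  qed
  have "real_of_int (\<Sum>k\<in>{1..n}. x k) = real t * (\<Sum>B\<in>Bs. l B * real (b + d))"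
  proof -
    have "(\<Sum>B\<in>Bs. l B * real (card (B \<inter> {1..n}))) = (\<Sum>B\<in>Bs. l B * real (b + d))"
      by (rule sum.cong) (use memB in \<open>auto simp: Int_absorb2\<close>)
    thus ?thesis using sm[of n] by simp
  qed
  also have "\<dots> = real t * real (b+d)" using l1 by (simp add: sum_distrib_right[symmetric])
  also have "\<dots> = real_of_int (int t * int (b+d))" by simp
  finally have tot: "(\<Sum>k\<in>{1..n}. x k) = int t * int (b+d)" by (simp only: of_int_eq_iff)
  have "real t * real b = real t * (\<Sum>B\<in>Bs. l B * real b)" using l1 by (simp add: sum_distrib_right[symmetric])
  also have "\<dots> \<le> real t * (\<Sum>B\<in>Bs. l B * real (card (B \<inter> {1..a+b})))"
  proof (rule mult_left_mono, rule sum_mono)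
    fix B assume B: "B \<in> Bs"
    have "B \<inter> {1..a+b} = B \<inter> {..a+b}" using memB[OF B] by auto
    hence "b \<le> card (B \<inter> {1..a+b})" using memB[OF B] by simp
    thus "l B * real b \<le> l B * real (card (B \<inter> {1..a+b}))" using l0 B by (simp add: mult_left_mono)
  qed simp
  also have "\<dots> = real_of_int (\<Sum>k\<in>{1..a+b}. x k)" using sm[of "a+b"] by (simp add: n_def)
  finally have "real_of_int (int t * int b) \<le> real_of_int (\<Sum>k\<in>{1..a+b}. x k)" by simp
  hence "int t * int b \<le> (\<Sum>k\<in>{1..a+b}. x k)" by (simp only: of_int_le_iff)
  thus ?thesis using bnd tot by (simp add: n_def)
qed



lemma hermite: "t > 0 \<Longrightarrow> (\<Sum>L<t. (v + L) div t) = (v::nat)"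
proof (induction v)
  case 0
  thus ?case by simp
next
  case (Suc v)
  have "(\<Sum>L<Suc t. (v + L) div t) = (v + 0) div t + (\<Sum>L<t. (v + Suc L) div t)"
    by (rule sum.lessThan_Suc_shift)
  moreover have "(\<Sum>L<Suc t. (v + L) div t) = (\<Sum>L<t. (v + L) div t) + (v + t) div t" by simp
  moreover have "(v + t) div t = v div t + 1" using Suc.prems by simp
  ultimately have "(\<Sum>L<t. (v + Suc L) div t) = v + 1" using Suc by simp
  thus ?case by simp
qed

lemma div_step: "(t::nat) > 0 \<Longrightarrow> v \<le> w \<Longrightarrow> w \<le> v + t \<Longrightarrow> (v+L) div t \<le> (w+L) div t \<and> (w+L) div t \<le> (v+L) div t + 1"
proof -
  assume t: "t > 0" and vw: "v \<le> w" "w \<le> v + t"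
  have "(w+L) div t \<le> (v+L+t) div t" using vw by (intro div_le_mono) simp
  also have "\<dots> = (v+L) div t + 1" using t by simp
  finally show ?thesis using vw by (simp add: div_le_mono)
qed

lemma fibres_card:
  assumes "finite A" "finite Bs" "f ` A \<subseteq> Bs"
  shows "card A = (\<Sum>B\<in>Bs. card {L\<in>A. f L = B})"
  using sum.group[OF assms, of "\<lambda>_. (1::nat)"] by simp

locale layer =
  fixes t n :: nat and y :: "nat \<Rightarrow> nat"
  assumes tpos: "t > 0" and ybnd: "\<And>k. y k \<le> t"
begin

definition C :: "nat \<Rightarrow> nat" where "C k = (\<Sum>i\<in>{1..k}. y i)"
definition h :: "nat \<Rightarrow> nat \<Rightarrow> nat" where "h L v = (v + L) div t"
definition BL :: "nat \<Rightarrow> nat set" where "BL L = {k\<in>{1..n}. h L (C (k-1)) < h L (C k)}"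

lemma C0: "C 0 = 0" by (simp add: C_def)
lemma CSuc: "C (Suc k) = C k + y (Suc k)" by (simp add: C_def)

lemma h_step: "h L (C k) \<le> h L (C (Suc k)) \<and> h L (C (Suc k)) \<le> h L (C k) + 1"
  unfolding h_def CSuc using div_step[OF tpos, of "C k" "C k + y (Suc k)" L] ybnd[of "Suc k"] by simp

lemma card_BL: "L < t \<Longrightarrow> k \<le> n \<Longrightarrow> card (BL L \<inter> {1..k}) = h L (C k)"
proof (induction k)
  case 0
  thus ?case by (simp add: C0 h_def)
next
  case (Suc k)
  have IH: "card (BL L \<inter> {1..k}) = h L (C k)" using Suc by simp
  show ?case
  proof (cases "Suc k \<in> BL L")
    case True
    hence "BL L \<inter> {1..Suc k} = insert (Suc k) (BL L \<inter> {1..k})" by (auto simp: BL_def)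
    hence "card (BL L \<inter> {1..Suc k}) = Suc (card (BL L \<inter> {1..k}))" by simp
    moreover have "h L (C k) < h L (C (Suc k))" using True by (simp add: BL_def)
    ultimately show ?thesis using IH h_step[of L k] by simp
  next
    case False
    hence "BL L \<inter> {1..Suc k} = BL L \<inter> {1..k}" by (auto simp: BL_def le_Suc_eq)
    moreover have "\<not> h L (C k) < h L (C (Suc k))" using False Suc.prems by (simp add: BL_def)
    ultimately show ?thesis using IH h_step[of L k] by simp
  qed
qed

lemma BL_sub: "BL L \<subseteq> {1..n}" by (auto simp: BL_def)

lemma card_layers: 
  assumes k: "k \<in> {1..n}"
  shows "card {L\<in>{..<t}. k \<in> BL L} = y k"
proof -
  obtain j where j: "k = Suc j" using k by (cases k) auto
  have "card {L\<in>{..<t}. k \<in> BL L} = (\<Sum>L<t. if k \<in> BL L then 1 else 0)"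
    by (simp add: sum.If_cases Collect_conj_eq Int_commute lessThan_def)
  also have "\<dots> = (\<Sum>L<t. h L (C k) - h L (C j))"
  proof (rule sum.cong)
    fix L assume "L \<in> {..<t}"
    show "(if k \<in> BL L then 1 else 0) = h L (C k) - h L (C j)"
      using h_step[of L j] k j by (auto simp: BL_def)
  qed simp
  also have "\<dots> = (\<Sum>L<t. h L (C k)) - (\<Sum>L<t. h L (C j))"
    by (rule sum_subtractf_nat) (use h_step j in auto)
  also have "\<dots> = C k - C j" unfolding h_def using hermite[OF tpos] by simp
  also have "\<dots> = y k" using j CSuc by simp
  finally show ?thesis .
qed

end



lemma cons_to_poly:
  fixes x :: "nat \<Rightarrow> int"
  assumes b: "b > 0" and t: "t > 0"
    and bnd: "\<forall>k\<in>{1..a+b+c+d}. 0 \<le> x k \<and> x k \<le> int t"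
    and tot: "(\<Sum>k\<in>{1..a+b+c+d}. x k) = int t * int (b+d)"
    and pre: "int t * int b \<le> (\<Sum>k\<in>{1..a+b}. x k)"
  shows "in_dilated_polytope (a+b+c+d) (schubert_bases (a+b+c+d) (schubert_set [a,b,c,d])) t (\<lambda>k. real_of_int (x k))"
proof -
  define n where "n = a+b+c+d"
  define Bs where "Bs = schubert_bases n (schubert_set [a,b,c,d])"
  define y where "y k = (if k \<in> {1..n} then nat (x k) else 0)" for k
  interpret layer t n y
  proof
    fix k show "y k \<le> t" using bnd by (auto simp: y_def n_def nat_le_iff)
  qed (use t in simp)
  have fB: "finite Bs" unfolding Bs_def by (rule finite_sb)
  have Cint: "int (C k) = (\<Sum>i\<in>{1..k}. x i)" if "k \<le> n" for k
    unfolding C_def of_nat_sum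
    by (rule sum.cong) (use that bnd in \<open>auto simp: y_def n_def\<close>)
  have Cn: "C n = t * (b+d)"
  proof -
    have "int (C n) = int (t * (b+d))" using Cint[of n] tot by (simp add: n_def)
    thus ?thesis by (simp only: of_nat_eq_iff)
  qed
  have Cab: "t * b \<le> C (a+b)"
  proof -
    have "int (t * b) \<le> int (C (a+b))" using Cint[of "a+b"] pre by (simp add: n_def)
    thus ?thesis by (simp only: of_nat_le_iff)
  qed
  have inB: "BL L \<in> Bs" if L: "L < t" for L
  proof -
    have c1: "card (BL L) = b + d"
    proof -
      have "card (BL L) = card (BL L \<inter> {1..n})" using BL_sub by (simp add: Int_absorb2)
      also have "\<dots> = h L (C n)" by (rule card_BL[OF L]) simp
      also have "\<dots> = b + d" using L t by (simp add: h_def Cn)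
      finally show ?thesis .
    qed
    have c2: "b \<le> card (BL L \<inter> {..a+b})"
    proof -
      have "BL L \<inter> {..a+b} = BL L \<inter> {1..a+b}" using BL_sub[of L] by auto
      hence "card (BL L \<inter> {..a+b}) = h L (C (a+b))" using card_BL[OF L, of "a+b"] by (simp add: n_def)
      also have "\<dots> \<ge> C (a+b) div t" unfolding h_def by (simp add: div_le_mono)
      moreover have "C (a+b) div t \<ge> b" using Cab t
        by (metis div_le_mono mult.commute nonzero_mult_div_cancel_right not_gr0)
      ultimately show ?thesis by linarith
    qed
    show ?thesis using gale_char[of "BL L" a b c d] BL_sub c1 c2 b
      by (simp add: Bs_def schubert_bases_def n_def)
  qed
  define l where "l B = real (card {L\<in>{..<t}. BL L = B}) / real t" for B
  have img: "BL ` {..<t} \<subseteq> Bs" using inB by auto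
  have "(\<Sum>B\<in>Bs. l B) = 1"
  proof -
    have "(\<Sum>B\<in>Bs. l B) = real (\<Sum>B\<in>Bs. card {L\<in>{..<t}. BL L = B}) / real t"
      by (simp add: l_def sum_divide_distrib)
    also have "(\<Sum>B\<in>Bs. card {L\<in>{..<t}. BL L = B}) = card {..<t}"
      using fibres_card[of "{..<t}" Bs BL] fB img by simp
    finally show ?thesis using t by simp
  qed
  moreover have "real_of_int (x k) = real t * (\<Sum>B\<in>Bs. l B * (if k \<in> B then 1 else 0))"
    if k: "k \<in> {1..n}" for k
  proof -
    define A where "A = {L\<in>{..<t}. k \<in> BL L}"
    have imgA: "BL ` A \<subseteq> Bs" using inB by (auto simp: A_def)
    have "real t * (\<Sum>B\<in>Bs. l B * (if k \<in> B then 1 else 0))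
        = (\<Sum>B\<in>Bs. real (card {L\<in>A. BL L = B}))"
      unfolding sum_distrib_left
    proof (rule sum.cong)
      fix B assume "B \<in> Bs"
      show "real t * (l B * (if k \<in> B then 1 else 0)) = real (card {L\<in>A. BL L = B})"
      proof (cases "k \<in> B")
        case True
        hence "{L\<in>A. BL L = B} = {L\<in>{..<t}. BL L = B}" by (auto simp: A_def)
        thus ?thesis using True t by (simp add: l_def)
      next
        case False
        hence e: "{L\<in>A. BL L = B} = {}" by (auto simp: A_def)
        show ?thesis using False by (simp only: e card.empty) simp
      qed
    qed simp
    also have "\<dots> = real (card A)"
      using fibres_card[of A Bs BL] fB imgA by (simp add: A_def)
    also have "card A = y k" unfolding A_def by (rule card_layers[OF k])
    finally show ?thesis using k bnd by (simp add: y_def n_def)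
  qed
  moreover have "\<forall>B\<in>Bs. l B \<ge> 0" by (simp add: l_def)
  ultimately show ?thesis unfolding in_dilated_polytope_def Bs_def n_def by blast
qed



definition E :: "nat \<Rightarrow> nat \<Rightarrow> int \<Rightarrow> int" where
  "E t m N = (\<Sum>j\<le>m. (-1)^j * int (m choose j) * binom (N - int j * (int t + 1) + int m - 1) (int m - 1))"

lemma binom_pascal:
  assumes K: "K \<ge> 0"
  shows "binom (M+1) (K+1) = binom M K + binom M (K+1)"
proof (cases "M < K")
  case True thus ?thesis using K by (simp add: binom_def)
next
  case False
  hence M: "M \<ge> K" by simp
  have n1: "nat (M+1) = Suc (nat M)" and n2: "nat (K+1) = Suc (nat K)" using M K by auto
  have "binom (M+1) (K+1) = int (Suc (nat M) choose Suc (nat K))"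
    using M K by (simp add: binom_def n1 n2)
  also have "\<dots> = int (nat M choose nat K) + int (nat M choose Suc (nat K))" by simp
  also have "int (nat M choose nat K) = binom M K" using M K by (simp add: binom_def)
  also have "int (nat M choose Suc (nat K)) = binom M (K+1)"
  proof (cases "M < K + 1")
    case True
    hence "nat M < Suc (nat K)" using K M by linarith
    thus ?thesis using True by (simp add: binom_def)
  next
    case False thus ?thesis using K by (simp add: binom_def n2)
  qed
  finally show ?thesis .
qed

lemma E_neg: "m \<ge> 1 \<Longrightarrow> N < 0 \<Longrightarrow> E t m N = 0"
proof -
  assume "m \<ge> 1" "N < 0"
  have "N - int j * (int t + 1) + int m - 1 < int m - 1" for j
  proof -
    have "0 \<le> int j * (int t + 1)" by simp
    thus ?thesis using \<open>N < 0\<close> by linarith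
  qed
  thus ?thesis unfolding E_def by (intro sum.neutral ballI) (simp add: binom_def)
qed

lemma E_one: "E t 1 N = (if 0 \<le> N \<and> N \<le> int t then 1 else 0)"
  by (simp add: E_def binom_def)

lemma E_rec:
  assumes m: "m \<ge> 1"
  shows "E t (Suc m) N = E t (Suc m) (N-1) + E t m N - E t m (N - int t - 1)"
proof -
  define g where "g N j = binom (N - int j * (int t + 1) + int m - 1) (int m - 1)" for N j
  have K: "int m - 1 \<ge> 0" using m by simp
  have diff: "binom (N - int j * (int t + 1) + int (Suc m) - 1) (int (Suc m) - 1)
      - binom (N - 1 - int j * (int t + 1) + int (Suc m) - 1) (int (Suc m) - 1) = g N j" for j
    using binom_pascal[OF K, of "N - 1 - int j * (int t + 1) + int m"]
    by (simp add: g_def algebra_simps)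
  have "E t (Suc m) N - E t (Suc m) (N-1) = (\<Sum>j\<le>Suc m. (-1)^j * int (Suc m choose j) * g N j)"
    unfolding E_def sum_subtractf[symmetric]
    by (rule sum.cong) (simp_all only: diff[symmetric] right_diff_distrib)
  also have "\<dots> = g N 0 + (\<Sum>j\<le>m. (-1)^(Suc j) * int (m choose Suc j) * g N (Suc j))
        + (\<Sum>j\<le>m. (-1)^(Suc j) * int (m choose j) * g N (Suc j))"
  proof -
    have "(\<Sum>j\<le>Suc m. (-1)^j * int (Suc m choose j) * g N j)
        = (-1)^0 * int (Suc m choose 0) * g N 0 + (\<Sum>j\<le>m. (-1)^(Suc j) * int (Suc m choose Suc j) * g N (Suc j))"
      by (rule sum.atMost_Suc_shift)
    also have "(\<Sum>j\<le>m. (-1)^(Suc j) * int (Suc m choose Suc j) * g N (Suc j))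
        = (\<Sum>j\<le>m. (-1)^(Suc j) * int (m choose Suc j) * g N (Suc j) + (-1)^(Suc j) * int (m choose j) * g N (Suc j))"
      by (rule sum.cong) (simp_all add: algebra_simps)
    finally show ?thesis by (simp add: sum.distrib sum_subtractf sum_negf)
  qed
  also have "g N 0 + (\<Sum>j\<le>m. (-1)^(Suc j) * int (m choose Suc j) * g N (Suc j))
      = (\<Sum>j\<le>Suc m. (-1)^j * int (m choose j) * g N j)"
    by (subst sum.atMost_Suc_shift) simp
  also have "\<dots> = E t m N" by (simp add: E_def g_def)
  also have "(\<Sum>j\<le>m. (-1)^(Suc j) * int (m choose j) * g N (Suc j)) = - E t m (N - int t - 1)"
    by (simp add: E_def g_def sum_negf[symmetric] algebra_simps)
  finally show ?thesis by simp
qed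



definition vecs :: "nat \<Rightarrow> nat \<Rightarrow> int \<Rightarrow> nat list set" where
  "vecs t m N = {xs. length xs = m \<and> (\<forall>v\<in>set xs. v \<le> t) \<and> int (sum_list xs) = N}"

definition G :: "nat \<Rightarrow> nat \<Rightarrow> int \<Rightarrow> int" where
  "G t m N = int (card (vecs t m N))"

lemma finite_vecs: "finite (vecs t m N)"
proof (rule finite_subset)
  show "vecs t m N \<subseteq> {xs. set xs \<subseteq> {0..t} \<and> length xs = m}" by (auto simp: vecs_def)
  show "finite {xs. set xs \<subseteq> {0..t} \<and> length xs = m}" by (rule finite_lists_length_eq) simp
qed

lemma G_neg: "N < 0 \<Longrightarrow> G t m N = 0"
proof -
  assume "N < 0"
  hence "vecs t m N = {}" by (auto simp: vecs_def)
  thus ?thesis by (simp add: G_def)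
qed

lemma G_one: "G t 1 N = (if 0 \<le> N \<and> N \<le> int t then 1 else 0)"
proof (cases "0 \<le> N \<and> N \<le> int t")
  case True
  have "vecs t 1 N = {[nat N]}"
  proof
    show "vecs t 1 N \<subseteq> {[nat N]}"
      by (auto simp: vecs_def length_Suc_conv)
    show "{[nat N]} \<subseteq> vecs t 1 N" using True by (auto simp: vecs_def nat_le_iff)
  qed
  thus ?thesis using True by (simp add: G_def)
next
  case False
  hence "vecs t 1 N = {}" by (auto simp: vecs_def length_Suc_conv)
  thus ?thesis using False by (simp add: G_def)
qed

lemma vecs_Suc: "vecs t (Suc m) N = (\<Union>i\<in>{..t}. (\<lambda>xs. i # xs) ` vecs t m (N - int i))"
proof
  show "vecs t (Suc m) N \<subseteq> (\<Union>i\<in>{..t}. (\<lambda>xs. i # xs) ` vecs t m (N - int i))"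
  proof
    fix xs assume "xs \<in> vecs t (Suc m) N"
    then obtain i ys where xs: "xs = i # ys" and "length ys = m" "i \<le> t" "\<forall>v\<in>set ys. v \<le> t"
      "int i + int (sum_list ys) = N"
      by (auto simp: vecs_def length_Suc_conv)
    hence "ys \<in> vecs t m (N - int i)" by (auto simp: vecs_def)
    thus "xs \<in> (\<Union>i\<in>{..t}. (\<lambda>xs. i # xs) ` vecs t m (N - int i))"
      using xs \<open>i \<le> t\<close> by blast
  qed
  show "(\<Union>i\<in>{..t}. (\<lambda>xs. i # xs) ` vecs t m (N - int i)) \<subseteq> vecs t (Suc m) N"
    by (auto simp: vecs_def)
qed

lemma G_Suc: "G t (Suc m) N = (\<Sum>i\<le>t. G t m (N - int i))"
proof -
  have "card (vecs t (Suc m) N) = (\<Sum>i\<le>t. card ((\<lambda>xs. i # xs) ` vecs t m (N - int i)))"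
    unfolding vecs_Suc
    by (rule card_UN_disjoint) (auto simp: finite_vecs)
  also have "\<dots> = (\<Sum>i\<le>t. card (vecs t m (N - int i)))"
    by (rule sum.cong) (auto simp: card_image)
  finally show ?thesis by (simp add: G_def)
qed

lemma G_rec: "G t (Suc m) N = G t (Suc m) (N-1) + G t m N - G t m (N - int t - 1)"
proof -
  have "(\<Sum>i\<le>Suc t. G t m (N - int i)) = G t m (N - int 0) + (\<Sum>i\<le>t. G t m (N - int (Suc i)))"
    by (rule sum.atMost_Suc_shift)
  moreover have "(\<Sum>i\<le>Suc t. G t m (N - int i)) = (\<Sum>i\<le>t. G t m (N - int i)) + G t m (N - int (Suc t))"
    by simp
  moreover have "(\<Sum>i\<le>t. G t m (N - int (Suc i))) = (\<Sum>i\<le>t. G t m (N - 1 - int i))"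
    by (rule sum.cong) (simp_all add: algebra_simps)
  ultimately have e: "(\<Sum>i\<le>t. G t m (N - int i)) + G t m (N - int (Suc t)) = G t m N + (\<Sum>i\<le>t. G t m (N - 1 - int i))"
    by simp
  have "G t m (N - int (Suc t)) = G t m (N - int t - 1)" by (simp add: algebra_simps)
  thus ?thesis using e G_Suc[of t m N] G_Suc[of t m "N-1"] by linarith

qed

lemma G_E: "m \<ge> 1 \<Longrightarrow> G t m N = E t m N"
proof (induction m arbitrary: N rule: nat_induct_at_least)
  case base
  show ?case using G_one[of t N] E_one[of t N] by simp
next
  case (Suc m)
  have neg: "N < 0 \<Longrightarrow> G t (Suc m) N = E t (Suc m) N" for N
    by (simp add: G_neg E_neg)
  have nat: "G t (Suc m) (int k) = E t (Suc m) (int k)" for k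
  proof (induction k)
    case 0
    have "G t (Suc m) 0 = G t (Suc m) (0-1) + G t m 0 - G t m (0 - int t - 1)" by (rule G_rec)
    also have "\<dots> = E t (Suc m) (0-1) + E t m 0 - E t m (0 - int t - 1)"
      using neg[of "0-1"] Suc.IH[of 0] Suc.IH[of "0 - int t - 1"] by simp
    also have "\<dots> = E t (Suc m) 0" using E_rec[OF Suc.hyps, of t 0] by simp
    finally show ?case by simp
  next
    case (Suc k)
    have "G t (Suc m) (int (Suc k)) = G t (Suc m) (int (Suc k) - 1) + G t m (int (Suc k)) - G t m (int (Suc k) - int t - 1)"
      by (rule G_rec)
    also have "\<dots> = E t (Suc m) (int (Suc k) - 1) + E t m (int (Suc k)) - E t m (int (Suc k) - int t - 1)"
      using Suc.IH \<open>\<And>N. G t m N = E t m N\<close>[of "int (Suc k)"] \<open>\<And>N. G t m N = E t m N\<close>[of "int (Suc k) - int t - 1"] by simp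
    also have "\<dots> = E t (Suc m) (int (Suc k))" using E_rec[OF \<open>1 \<le> m\<close>, of t "int (Suc k)"] by simp
    finally show ?case .
  qed
  show ?case
  proof (cases "N < 0")
    case True thus ?thesis by (rule neg)
  next
    case False
    then obtain k where "N = int k" by (metis nonneg_eq_int not_less)
    thus ?thesis using nat by simp
  qed
qed

lemma F_E: "a + b \<ge> 1 \<Longrightarrow> F a b c t = E t (a+b) (int t * int b + c)"
  unfolding F_def E_def atLeast0AtMost
proof (rule sum.cong)
  fix j assume "j \<in> {..a+b}"
  have e1: "(int t + 1) * (int b - int j) + int a + c - 1 = int t * int b + c - int j * (int t + 1) + int (a + b) - 1"
    by (simp add: algebra_simps)
  have e2: "int a + int b - 1 = int (a+b) - 1" by simp
  show "(- 1) ^ j * int ((a + b) choose j) * binom ((int t + 1) * (int b - int j) + int a + c - 1) (int a + int b - 1) =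
         (- 1) ^ j * int ((a + b) choose j) * binom (int t * int b + c - int j * (int t + 1) + int (a + b) - 1) (int (a + b) - 1)"
    by (simp only: e1 e2)
qed simp

lemma F_G: "a + b \<ge> 1 \<Longrightarrow> F a b c t = G t (a+b) (int t * int b + c)"
  by (simp add: F_E G_E)

lemma G_compl: "G t m N = G t m (int t * int m - N)"
proof -
  have key: "int (sum_list (map (\<lambda>v. t - v) xs)) = int t * int (length xs) - int (sum_list xs)"
    if "\<forall>v\<in>set xs. v \<le> t" for xs
    using that by (induction xs) (auto simp: algebra_simps of_nat_diff)
  have inv: "map (\<lambda>v. t - v) (map (\<lambda>v. t - v) xs) = xs" if "\<forall>v\<in>set xs. v \<le> t" for xs
    using that by (induction xs) auto
  have "bij_betw (map (\<lambda>v. t - v)) (vecs t m N) (vecs t m (int t * int m - N))"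
  proof (rule bij_betw_byWitness[where f' = "map (\<lambda>v. t - v)"])
    show "\<forall>xs\<in>vecs t m N. map (\<lambda>v. t - v) (map (\<lambda>v. t - v) xs) = xs"
      using inv by (auto simp: vecs_def)
    show "\<forall>xs\<in>vecs t m (int t * int m - N). map (\<lambda>v. t - v) (map (\<lambda>v. t - v) xs) = xs"
      using inv by (auto simp: vecs_def)
    show "map (\<lambda>v. t - v) ` vecs t m N \<subseteq> vecs t m (int t * int m - N)"
    proof
      fix ys assume "ys \<in> map (\<lambda>v. t - v) ` vecs t m N"
      then obtain xs where ys: "ys = map (\<lambda>v. t - v) xs" and xs: "xs \<in> vecs t m N" by blast
      thus "ys \<in> vecs t m (int t * int m - N)" using key[of xs] by (auto simp: vecs_def)
    qed
    show "map (\<lambda>v. t - v) ` vecs t m (int t * int m - N) \<subseteq> vecs t m N"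
    proof
      fix ys assume "ys \<in> map (\<lambda>v. t - v) ` vecs t m (int t * int m - N)"
      then obtain xs where ys: "ys = map (\<lambda>v. t - v) xs" and xs: "xs \<in> vecs t m (int t * int m - N)" by blast
      thus "ys \<in> vecs t m N" using key[of xs] by (auto simp: vecs_def)
    qed
  qed
  thus ?thesis by (simp add: G_def bij_betw_same_card)
qed



declare upt_Suc[simp del]

lemma sum_map_upt: "int (sum_list (map (\<lambda>k. nat (x k)) [1..<m+1])) = (\<Sum>k\<in>{1..m}. x k)"
  if "\<forall>k\<in>{1..m}. 0 \<le> (x k :: int)" for m
proof -
  have "sum_list (map (\<lambda>k. nat (x k)) [1..<m+1]) = (\<Sum>k\<in>{1..<m+1}. nat (x k))"
    by (simp add: sum_list_distinct_conv_sum_set del: upt_Suc)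
  also have "{1..<m+1} = {1..m}" by auto
  finally have "int (sum_list (map (\<lambda>k. nat (x k)) [1..<m+1])) = (\<Sum>k\<in>{1..m}. int (nat (x k)))"
    by (simp add: of_nat_sum)
  also have "\<dots> = (\<Sum>k\<in>{1..m}. x k)" by (rule sum.cong) (use that in auto)
  finally show ?thesis .
qed

lemma take_map_upt: "m \<le> n \<Longrightarrow> take m (map f [1..<n+1]) = map f [1..<m+1]"
  by (simp add: take_map take_upt del: upt_Suc)

definition Xset :: "nat \<Rightarrow> nat \<Rightarrow> nat \<Rightarrow> nat \<Rightarrow> nat \<Rightarrow> (nat \<Rightarrow> int) set" where
  "Xset a b c d t = {x. (\<forall>k. k \<notin> {1..a+b+c+d} \<longrightarrow> x k = 0) \<and> (\<forall>k\<in>{1..a+b+c+d}. 0 \<le> x k \<and> x k \<le> int t)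
       \<and> (\<Sum>k\<in>{1..a+b+c+d}. x k) = int t * int (b+d) \<and> int t * int b \<le> (\<Sum>k\<in>{1..a+b}. x k)}"

definition Lset :: "nat \<Rightarrow> nat \<Rightarrow> nat \<Rightarrow> nat \<Rightarrow> nat \<Rightarrow> nat list set" where
  "Lset a b c d t = {xs. length xs = a+b+c+d \<and> (\<forall>v\<in>set xs. v \<le> t)
       \<and> int (sum_list xs) = int t * int (b+d) \<and> int t * int b \<le> int (sum_list (take (a+b) xs))}"

lemma X_L: "card (Xset a b c d t) = card (Lset a b c d t)"
proof -
  define n where "n = a+b+c+d"
  define \<phi> where "\<phi> x = map (\<lambda>k. nat (x k)) [1..<n+1]" for x :: "nat \<Rightarrow> int"
  define \<psi> where "\<psi> xs = (\<lambda>k. if k \<in> {1..n} then int (xs ! (k-1)) else 0)" for xs :: "nat list"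
  have psiphi: "\<psi> (\<phi> x) = x" if "x \<in> Xset a b c d t" for x
  proof
    fix k show "\<psi> (\<phi> x) k = x k"
    proof (cases "k \<in> {1..n}")
      case True
      hence "\<phi> x ! (k-1) = nat (x k)" by (auto simp: \<phi>_def nth_map simp del: upt_Suc)
      thus ?thesis using True that by (simp add: \<psi>_def Xset_def n_def)
    next
      case False
      have "\<psi> (\<phi> x) k = 0" using False by (auto simp: \<psi>_def)
      moreover have "x k = 0" using that False unfolding Xset_def n_def by blast
      ultimately show ?thesis by simp
    qed
  qed
  have phipsi: "\<phi> (\<psi> xs) = xs" if "length xs = n" for xs
  proof (rule nth_equalityI)
    show "length (\<phi> (\<psi> xs)) = length xs" using that by (simp add: \<phi>_def)
    fix i assume "i < length (\<phi> (\<psi> xs))"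
    hence "i < n" by (simp add: \<phi>_def)
    thus "\<phi> (\<psi> xs) ! i = xs ! i" by (simp add: \<phi>_def \<psi>_def nth_map)
  qed
  have sumphi: "int (sum_list (take m (\<phi> x))) = (\<Sum>k\<in>{1..m}. x k)"
    if "m \<le> n" "\<forall>k\<in>{1..n}. 0 \<le> x k" for m x
    using sum_map_upt[of m x] take_map_upt[of m n "\<lambda>k. nat (x k)"] that by (simp add: \<phi>_def)
  have "bij_betw \<phi> (Xset a b c d t) (Lset a b c d t)"
  proof (rule bij_betw_byWitness[where f' = \<psi>])
    show "\<forall>x\<in>Xset a b c d t. \<psi> (\<phi> x) = x" using psiphi by blast
    show "\<forall>xs\<in>Lset a b c d t. \<phi> (\<psi> xs) = xs" using phipsi by (simp add: Lset_def n_def)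
    show "\<phi> ` Xset a b c d t \<subseteq> Lset a b c d t"
    proof
      fix ys assume "ys \<in> \<phi> ` Xset a b c d t"
      then obtain x where ys: "ys = \<phi> x" and x: "x \<in> Xset a b c d t" by blast
      have nn: "\<forall>k\<in>{1..n}. 0 \<le> x k" using x by (simp add: Xset_def n_def)
      have "length ys = n" by (simp add: ys \<phi>_def)
      moreover have "\<forall>v\<in>set ys. v \<le> t" using x by (auto simp: ys \<phi>_def Xset_def n_def nat_le_iff)
      moreover have "int (sum_list ys) = int t * int (b+d)"
        using sumphi[of n x] nn x \<open>length ys = n\<close> unfolding Xset_def n_def by (simp add: ys)
      moreover have "int t * int b \<le> int (sum_list (take (a+b) ys))"
        using sumphi[of "a+b" x] nn x by (simp add: ys Xset_def n_def)
      ultimately show "ys \<in> Lset a b c d t" by (simp add: Lset_def n_def)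
    qed
    show "\<psi> ` Lset a b c d t \<subseteq> Xset a b c d t"
    proof
      fix y assume "y \<in> \<psi> ` Lset a b c d t"
      then obtain xs where y: "y = \<psi> xs" and xs: "xs \<in> Lset a b c d t" by blast
      have len: "length xs = n" using xs by (simp add: Lset_def n_def)
      have bnd: "\<forall>k\<in>{1..n}. 0 \<le> y k \<and> y k \<le> int t"
      proof
        fix k assume k: "k \<in> {1..n}"
        hence "xs ! (k-1) \<in> set xs" using len by auto
        thus "0 \<le> y k \<and> y k \<le> int t" using xs k by (auto simp: y \<psi>_def Lset_def)
      qed
      have nn: "\<forall>k\<in>{1..n}. 0 \<le> y k" using bnd by blast
      have "\<phi> y = xs" using phipsi[OF len] y by simp
      hence s1: "(\<Sum>k\<in>{1..m}. y k) = int (sum_list (take m xs))" if "m \<le> n" for m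
        using sumphi[OF that nn] by simp
      have "(\<forall>k. k \<notin> {1..n} \<longrightarrow> y k = 0)" by (simp add: y \<psi>_def)
      moreover have "(\<Sum>k\<in>{1..n}. y k) = int t * int (b+d)" using s1[of n] len xs by (simp add: Lset_def)
      moreover have "int t * int b \<le> (\<Sum>k\<in>{1..a+b}. y k)" using s1[of "a+b"] xs by (simp add: Lset_def n_def)
      ultimately show "y \<in> Xset a b c d t" using bnd by (simp add: Xset_def n_def)
    qed
  qed
  thus ?thesis by (rule bij_betw_same_card)
qed



lemma sum_list_bnd: "\<forall>v\<in>set xs. v \<le> t \<Longrightarrow> sum_list xs \<le> t * length xs"
  by (induction xs) auto

definition Pset :: "nat \<Rightarrow> nat \<Rightarrow> nat \<Rightarrow> nat \<Rightarrow> nat \<Rightarrow> (nat list \<times> nat list) set" where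
  "Pset a b c d t = (\<Union>j\<in>{0..int (t * min a d)}. vecs t (a+b) (int t * int b + j) \<times> vecs t (c+d) (int t * int d - j))"

lemma L_P: "card (Lset a b c d t) = card (Pset a b c d t)"
proof -
  have "bij_betw (\<lambda>xs. (take (a+b) xs, drop (a+b) xs)) (Lset a b c d t) (Pset a b c d t)"
  proof (rule bij_betw_byWitness[where f' = "\<lambda>(ys,zs). ys @ zs"])
    show "\<forall>xs\<in>Lset a b c d t. (\<lambda>(ys,zs). ys @ zs) (take (a+b) xs, drop (a+b) xs) = xs" by simp
    show "\<forall>p\<in>Pset a b c d t. (take (a+b) ((\<lambda>(ys,zs). ys @ zs) p), drop (a+b) ((\<lambda>(ys,zs). ys @ zs) p)) = p"
      by (auto simp: Pset_def vecs_def)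
    show "(\<lambda>xs. (take (a+b) xs, drop (a+b) xs)) ` Lset a b c d t \<subseteq> Pset a b c d t"
    proof
      fix p assume "p \<in> (\<lambda>xs. (take (a+b) xs, drop (a+b) xs)) ` Lset a b c d t"
      then obtain xs where p: "p = (take (a+b) xs, drop (a+b) xs)" and xs: "xs \<in> Lset a b c d t" by blast
      define ys where "ys = take (a+b) xs"
      define zs where "zs = drop (a+b) xs"
      have len: "length ys = a+b" "length zs = c+d" using xs by (auto simp: Lset_def ys_def zs_def)
      have bys: "\<forall>v\<in>set ys. v \<le> t" using xs set_take_subset[of "a+b" xs] by (auto simp: Lset_def ys_def)
      have bzs: "\<forall>v\<in>set zs. v \<le> t" using xs set_drop_subset[of "a+b" xs] by (auto simp: Lset_def zs_def)
      have sxs: "sum_list xs = sum_list ys + sum_list zs"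
        by (simp add: ys_def zs_def flip: sum_list_append)
      define j where "j = int (sum_list ys) - int t * int b"
      have j0: "0 \<le> j" using xs by (simp add: Lset_def j_def ys_def)
      have "sum_list ys \<le> t * (a+b)" using sum_list_bnd[OF bys] len by simp
      hence "int (sum_list ys) \<le> int (t * (a+b))" by (simp only: of_nat_le_iff)
      hence ja: "j \<le> int t * int a" by (simp add: j_def algebra_simps)
      have "int (sum_list ys) \<le> int t * int (b+d)" using xs sxs by (simp add: Lset_def)
      hence jd: "j \<le> int t * int d" by (simp add: j_def algebra_simps)
      have jJ: "j \<in> {0..int (t * min a d)}" using j0 ja jd by (simp add: min_def)
      have "ys \<in> vecs t (a+b) (int t * int b + j)" using len bys by (simp add: vecs_def j_def)
      moreover have "zs \<in> vecs t (c+d) (int t * int d - j)"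
        using len bzs xs sxs by (simp add: vecs_def j_def Lset_def algebra_simps)
      ultimately show "p \<in> Pset a b c d t" using jJ by (auto simp: Pset_def p ys_def[symmetric] zs_def[symmetric])
    qed
    show "(\<lambda>(ys,zs). ys @ zs) ` Pset a b c d t \<subseteq> Lset a b c d t"
      by (auto simp: Pset_def vecs_def Lset_def algebra_simps)
  qed
  thus ?thesis by (rule bij_betw_same_card)
qed

lemma card_P: "int (card (Pset a b c d t)) = (\<Sum>j\<in>{0..int (t * min a d)}. G t (a+b) (int t * int b + j) * G t (c+d) (int t * int d - j))"
proof -
  have "card (Pset a b c d t) = (\<Sum>j\<in>{0..int (t * min a d)}. card (vecs t (a+b) (int t * int b + j) \<times> vecs t (c+d) (int t * int d - j)))"
    unfolding Pset_def
    apply (rule card_UN_disjoint)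
      apply simp
     apply (simp add: finite_vecs)
    apply (auto simp: vecs_def)
    done
  thus ?thesis by (simp add: G_def card_cartesian_product of_nat_sum)
qed



lemma M:
  assumes b: "b > 0" and t: "t > 0"
  shows "int (i_r [a,b,c,d] t) = (\<Sum>j\<in>{0..int (t * min a d)}. G t (a+b) (int t * int b + j) * G t (c+d) (int t * int d - j))"
proof -
  have sl: "sum_list [a,b,c,d] = a+b+c+d" by simp
  have eq: "{x :: nat \<Rightarrow> int. (\<forall>k. k \<notin> {1..a+b+c+d} \<longrightarrow> x k = 0) \<and>
        in_dilated_polytope (a+b+c+d) (schubert_bases (a+b+c+d) (schubert_set [a,b,c,d])) t (\<lambda>k. real_of_int (x k))}
      = Xset a b c d t"
  proof (rule set_eqI)
    fix x :: "nat \<Rightarrow> int"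
    show "x \<in> {x. (\<forall>k. k \<notin> {1..a+b+c+d} \<longrightarrow> x k = 0) \<and>
        in_dilated_polytope (a+b+c+d) (schubert_bases (a+b+c+d) (schubert_set [a,b,c,d])) t (\<lambda>k. real_of_int (x k))}
      \<longleftrightarrow> x \<in> Xset a b c d t"
      using poly_to_cons[OF b, of a c d t x] cons_to_poly[OF b t, of a c d x]
      unfolding Xset_def mem_Collect_eq by blast
  qed
  have "i_r [a,b,c,d] t = card (Xset a b c d t)"
    unfolding i_r_def sl ehrhart_def eq ..
  also have "\<dots> = card (Pset a b c d t)" using X_L L_P by simp
  finally show ?thesis using card_P by simp
qed

theorem mainTheorem7:
  fixes a b c d t :: nat
  assumes "a > 0" "b > 0" "c > 0" "d > 0" "t > 0"
  shows "int (i_r [a, b, c, d] t) = (\<Sum>j = 0..int (t * min a d). F a b j t * F c d (- j) t)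
       \<and> int (i_r [d, c, b, a] t) = (\<Sum>j = 0..int (t * min a d). F a b j t * F c d (- j) t)"
proof
  have FF: "F a b j t * F c d (- j) t = G t (a+b) (int t * int b + j) * G t (c+d) (int t * int d - j)" for j
    using F_G[of a b j t] F_G[of c d "-j" t] assms by simp
  show "int (i_r [a, b, c, d] t) = (\<Sum>j = 0..int (t * min a d). F a b j t * F c d (- j) t)"
    unfolding FF using M[OF assms(2) assms(5), of a c d] by simp
  have "int (i_r [d, c, b, a] t) = (\<Sum>j\<in>{0..int (t * min d a)}. G t (d+c) (int t * int c + j) * G t (b+a) (int t * int a - j))"
    by (rule M[OF assms(3) assms(5)])
  also have "\<dots> = (\<Sum>j = 0..int (t * min a d). F a b j t * F c d (- j) t)"
    unfolding FF
  proof (rule sum.cong)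
    show "{0..int (t * min d a)} = {0..int (t * min a d)}" by (simp add: min.commute)
    fix j
    have e1: "int t * int (d+c) - (int t * int c + j) = int t * int d - j" by (simp add: algebra_simps)
    have e2: "int t * int (b+a) - (int t * int a - j) = int t * int b + j" by (simp add: algebra_simps)
    have g1: "G t (d+c) (int t * int c + j) = G t (c+d) (int t * int d - j)"
      using G_compl[of t "d+c" "int t * int c + j"] unfolding e1 by (metis add.commute)
    have g2: "G t (b+a) (int t * int a - j) = G t (a+b) (int t * int b + j)"
      using G_compl[of t "b+a" "int t * int a - j"] unfolding e2 by (metis add.commute)
    show "G t (d+c) (int t * int c + j) * G t (b+a) (int t * int a - j) = G t (a+b) (int t * int b + j) * G t (c+d) (int t * int d - j)"
      unfolding g1 g2 by (rule mult.commute)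
  qed
  finally show "int (i_r [d, c, b, a] t) = (\<Sum>j = 0..int (t * min a d). F a b j t * F c d (- j) t)" .
qed

end
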